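(* Let $(\Omega,\mathcal A)$ be a measurable space and let $K:\Omega\to\mathcal K'(\mathbb C^n)$ be a random compact set. Then its polynomially convex hull $\widehat K$, defined by $\widehat K(\omega)=\widehat{K(\omega)}$, is a random compact set.
   Context: $\mathcal K'(\mathbb C^n)$ is the space of non-empty compact subsets of $\mathbb C^n$ with the Hausdorff distance and its Borel $\sigma$-algebra; a random compact set is a measurable map $\Omega\to\mathcal K'(\mathbb C^n)$. For a compact $L$, $\widehat L=\{z\in\mathbb C^n:|p(z)|\le\max_{x\in L}|p(x)| \text{ for all polynomials } p \text{ on } \mathbb C^n\}$. *)

theory Defs
  imports "HOL-Analysis.Analysis" "HOL-Probability.Probability"
begin

definition hausdist :: "'a::metric_space set \<Rightarrow> 'a set \<Rightarrow> real" where
  "hausdist A B = max (SUP x\<in>A. setdist {x} B) (SUP y\<in>B. setdist {y} A)"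

definition ncompacts :: "'a::metric_space set set" where
  "ncompacts = {L. compact L \<and> L \<noteq> {}}"

definition hausdorff_open :: "'a::metric_space set set \<Rightarrow> bool" where
  "hausdorff_open U \<longleftrightarrow> U \<subseteq> ncompacts \<and>
     (\<forall>L\<in>U. \<exists>e>0. \<forall>L'\<in>ncompacts. hausdist L L' < e \<longrightarrow> L' \<in> U)"

text \<open>K'(C^n) with its Borel sigma-algebra w.r.t. the Hausdorff metric.\<close>
definition Kspace :: "'a::metric_space set measure" where
  "Kspace = sigma ncompacts {U. hausdorff_open U}"

definition polynomial_fun :: "(complex ^ 'n \<Rightarrow> complex) \<Rightarrow> bool" where
  "polynomial_fun p \<longleftrightarrow> (\<exists>A c. finite (A :: ('n \<Rightarrow> nat) set) \<and>
     p = (\<lambda>z. \<Sum>\<alpha>\<in>A. c \<alpha> * (\<Prod>i\<in>UNIV. (z $ i) ^ (\<alpha> i))))"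

definition poly_hull :: "(complex ^ 'n) set \<Rightarrow> (complex ^ 'n) set" where
  "poly_hull L = {z. \<forall>p. polynomial_fun p \<longrightarrow> cmod (p z) \<le> (SUP x\<in>L. cmod (p x))}"

end

theory Submission
  imports Defs
begin

lemma bdd_setdist_img:
  fixes A :: "'a::metric_space set"
  assumes "compact A"
  shows "bdd_above ((\<lambda>x. setdist {x} B) ` A)"
proof -
  have "compact ((\<lambda>x. setdist {x} B) ` A)"
    by (intro compact_continuous_image continuous_on_setdist assms)
  then show ?thesis by (intro bounded_imp_bdd_above compact_imp_bounded)
qed

lemma hd_sym: "Defs.hausdist A B = Defs.hausdist B A"
  unfolding Defs.hausdist_def by (simp add: max.commute)

lemma hd_close:
  fixes A :: "'a::metric_space set"
  assumes "compact A" "A \<noteq> {}" "compact B" "B \<noteq> {}" "Defs.hausdist A B < e" "x \<in> A"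
  shows "\<exists>y\<in>B. dist x y < e"
proof -
  have "setdist {x} B \<le> (SUP x\<in>A. setdist {x} B)"
    by (intro cSUP_upper assms bdd_setdist_img)
  also have "\<dots> \<le> Defs.hausdist A B" unfolding Defs.hausdist_def by simp
  finally have "setdist {x} B < e" using assms by simp
  then obtain u y where "u \<in> {x}" "y \<in> B" "dist u y < e"
    using setdist_ltE assms by blast
  then show ?thesis by auto
qed

lemma hd_le:
  fixes A :: "'a::metric_space set"
  assumes "A \<noteq> {}" "B \<noteq> {}"
    and "\<And>x. x \<in> A \<Longrightarrow> \<exists>y\<in>B. dist x y \<le> b"
    and "\<And>y. y \<in> B \<Longrightarrow> \<exists>x\<in>A. dist y x \<le> b"
  shows "Defs.hausdist A B \<le> b"
proof -
  have "(SUP x\<in>A. setdist {x} B) \<le> b"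
  proof (rule cSUP_least[OF assms(1)])
    fix x assume "x \<in> A"
    then obtain y where "y \<in> B" "dist x y \<le> b" using assms(3) by blast
    then show "setdist {x} B \<le> b" using setdist_le_dist[of x "{x}" y B] by simp
  qed
  moreover have "(SUP y\<in>B. setdist {y} A) \<le> b"
  proof (rule cSUP_least[OF assms(2)])
    fix y assume "y \<in> B"
    then obtain x where "x \<in> A" "dist y x \<le> b" using assms(4) by blast
    then show "setdist {y} A \<le> b" using setdist_le_dist[of y "{y}" x A] by simp
  qed
  ultimately show ?thesis unfolding Defs.hausdist_def by simp
qed

lemma hd_triangle_lt:
  fixes A :: "'a::metric_space set"
  assumes "compact A" "A \<noteq> {}" "compact B" "B \<noteq> {}" "compact C" "C \<noteq> {}"
    and "Defs.hausdist A B < a" "Defs.hausdist B C < b"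
  shows "Defs.hausdist A C \<le> a + b"
proof (rule hd_le)
  fix x assume "x \<in> A"
  then obtain y where y: "y \<in> B" "dist x y < a" using hd_close assms by blast
  then obtain z where z: "z \<in> C" "dist y z < b" using hd_close assms by blast
  have "dist x z \<le> dist x y + dist y z" by (rule dist_triangle)
  then have "dist x z \<le> a + b" using y z by linarith
  with z show "\<exists>z\<in>C. dist x z \<le> a + b" by blast
next
  fix z assume "z \<in> C"
  then obtain y where y: "y \<in> B" "dist z y < b" using hd_close[of C B b z] assms hd_sym by metis
  then obtain x where x: "x \<in> A" "dist y x < a" using hd_close[of B A a y] assms hd_sym by metis
  have "dist z x \<le> dist z y + dist y x" by (rule dist_triangle)
  then have "dist z x \<le> a + b" using y x by linarith
  with x show "\<exists>x\<in>A. dist z x \<le> a + b" by blast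
qed (use assms in auto)

lemma hd_dense:
  fixes L :: "'a::{metric_space,second_countable_topology} set"
  assumes D: "\<And>X. open X \<Longrightarrow> X \<noteq> {} \<Longrightarrow> \<exists>d\<in>D. d \<in> X"
    and L: "compact L" "L \<noteq> {}" and e: "e > 0"
  shows "\<exists>C. finite C \<and> C \<subseteq> D \<and> C \<noteq> {} \<and> Defs.hausdist C L < e"
proof -
  have "L \<subseteq> (\<Union>x\<in>L. ball x (e/4))" using e by auto
  then obtain F where F: "F \<subseteq> L" "finite F" "L \<subseteq> (\<Union>x\<in>F. ball x (e/4))"
    using compactE_image[OF L(1), of L "\<lambda>x. ball x (e/4)"] by blast
  have FN: "F \<noteq> {}" using F L(2) by auto
  have "\<forall>f\<in>F. \<exists>d\<in>D. d \<in> ball f (e/4)"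
  proof
    fix f assume "f \<in> F"
    show "\<exists>d\<in>D. d \<in> ball f (e/4)" using D[of "ball f (e/4)"] e by auto
  qed
  then obtain g where g: "\<And>f. f \<in> F \<Longrightarrow> g f \<in> D \<and> g f \<in> ball f (e/4)" by metis
  have "Defs.hausdist (g ` F) L \<le> e/2"
  proof (rule hd_le)
    fix c assume "c \<in> g ` F"
    then obtain f where "f \<in> F" "c = g f" by auto
    then show "\<exists>y\<in>L. dist c y \<le> e/2" using g[of f] F(1) e by (intro bexI[of _ f]) (auto simp: dist_commute)
  next
    fix y assume "y \<in> L"
    then obtain f where f: "f \<in> F" "dist f y < e/4" using F(3) by auto
    then have "dist y (g f) < e/2" using g[OF f(1)] dist_triangle[of y "g f" f]
      by (simp add: dist_commute)
    then show "\<exists>x\<in>g ` F. dist y x \<le> e/2" using f by (intro bexI[of _ "g f"]) auto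
  qed (use FN L in auto)
  then show ?thesis using F(2) FN g e by (intro exI[of _ "g ` F"]) auto
qed

lemma poly_cont: "polynomial_fun p \<Longrightarrow> continuous_on S p"
  unfolding polynomial_fun_def by (auto intro!: continuous_intros)

lemma poly_coord: "polynomial_fun (\<lambda>z::complex^'n. z $ i)"
proof -
  have A: "(\<Prod>j\<in>UNIV. (z $ j) ^ (if j = i then 1 else 0)) = (\<Prod>j\<in>UNIV. if j = i then z $ j else (1::complex))"
    for z :: "complex^'n" by (rule prod.cong) auto
  have B: "(\<Prod>j\<in>UNIV. if j = i then z $ j else (1::complex)) = z $ i" for z :: "complex^'n"
    by (subst prod.delta) auto
  have "(\<lambda>z::complex^'n. z $ i) = (\<lambda>z. \<Sum>\<alpha>\<in>{\<lambda>j. if j = i then 1 else 0}. 1 * (\<Prod>j\<in>UNIV. (z $ j) ^ (\<alpha> j)))"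
  proof
    fix z :: "complex^'n"
    show "z $ i = (\<Sum>\<alpha>\<in>{\<lambda>j. if j = i then 1 else 0}. 1 * (\<Prod>j\<in>UNIV. (z $ j) ^ (\<alpha> j)))"
      by (simp only: sum.empty sum.insert_if finite.emptyI empty_iff if_False add_0_right mult_1 A B)
  qed
  then show ?thesis unfolding polynomial_fun_def by (intro exI[of _ "{\<lambda>j. if j = i then 1 else 0}"] exI[of _ "\<lambda>_. 1"]) simp
qed

lemma sup_attained:
  fixes f :: "'a::topological_space \<Rightarrow> real"
  assumes "compact L" "L \<noteq> {}" "continuous_on L f"
  shows "\<exists>y\<in>L. (SUP x\<in>L. f x) = f y \<and> (\<forall>x\<in>L. f x \<le> f y)"
proof -
  obtain y where y: "y \<in> L" "\<forall>x\<in>L. f x \<le> f y"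
    using continuous_attains_sup[OF assms] by blast
  then have "(SUP x\<in>L. f x) = f y"
    by (intro antisym cSUP_least cSUP_upper) (auto intro: bdd_aboveI2)
  then show ?thesis using y by blast
qed

lemma poly_bdd: "compact L \<Longrightarrow> polynomial_fun p \<Longrightarrow> bdd_above ((\<lambda>x. cmod (p x)) ` L)"
  by (intro bounded_imp_bdd_above compact_imp_bounded compact_continuous_image continuous_on_norm poly_cont)

lemma subset_hull:
  assumes "compact L" shows "L \<subseteq> poly_hull L"
  unfolding poly_hull_def using poly_bdd[OF assms] by (auto intro: cSUP_upper)

lemma hull_closed: "closed (poly_hull L)"
proof -
  have "poly_hull L = (\<Inter>p\<in>{p. polynomial_fun p}. {z. cmod (p z) \<le> (SUP x\<in>L. cmod (p x))})"
    unfolding poly_hull_def by auto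
  also have "closed \<dots>"
    by (intro closed_INT ballI closed_Collect_le continuous_on_norm poly_cont continuous_on_const) auto
  finally show ?thesis .
qed

lemma hull_bound:
  fixes L :: "(complex^'n) set"
  assumes "compact L" "L \<noteq> {}" "L \<subseteq> cball 0 R"
  shows "poly_hull L \<subseteq> cball 0 (real CARD('n) * R)"
proof
  fix z assume z: "z \<in> poly_hull L"
  have c: "norm (z $ i) \<le> R" for i
  proof -
    have "norm (z $ i) \<le> (SUP x\<in>L. cmod (x $ i))"
      using z poly_coord[of i] unfolding poly_hull_def by auto
    also have "\<dots> \<le> R"
    proof (intro cSUP_least assms(2))
      fix x assume "x \<in> L"
      then have "norm x \<le> R" using assms(3) by auto
      then show "cmod (x $ i) \<le> R" by (meson Finite_Cartesian_Product.norm_nth_le order_trans)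
    qed
    finally show ?thesis .
  qed
  have "norm z \<le> (\<Sum>i\<in>UNIV. norm (z $ i))"
    unfolding norm_vec_def by (rule L2_set_le_sum) auto
  also have "\<dots> \<le> (\<Sum>i\<in>(UNIV::'n set). R)" by (intro sum_mono c)
  finally show "z \<in> cball 0 (real CARD('n) * R)" by simp
qed

lemma hull_ncompact:
  fixes L :: "(complex^'n) set"
  assumes "L \<in> ncompacts" shows "poly_hull L \<in> ncompacts"
proof -
  have L: "compact L" "L \<noteq> {}" using assms unfolding ncompacts_def by auto
  obtain R where "\<forall>x\<in>L. norm x \<le> R" using compact_imp_bounded[OF L(1)] bounded_pos by metis
  then have "L \<subseteq> cball 0 R" by auto
  then have "poly_hull L \<subseteq> cball 0 (real CARD('n) * R)" using hull_bound[OF L] by blast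
  then have "bounded (poly_hull L)" using bounded_cball bounded_subset by blast
  then have "compact (poly_hull L)" using hull_closed compact_eq_bounded_closed by blast
  moreover have "poly_hull L \<noteq> {}" using subset_hull[OF L(1)] L(2) by blast
  ultimately show ?thesis unfolding ncompacts_def by blast
qed

lemma finite_delta:
  assumes "finite T" "\<And>\<tau>. \<tau> \<in> T \<Longrightarrow> \<exists>\<delta>>0. P \<tau> (\<delta>::real)"
    and mono: "\<And>\<tau> \<delta> \<delta>'. P \<tau> \<delta> \<Longrightarrow> 0 < \<delta>' \<Longrightarrow> \<delta>' \<le> \<delta> \<Longrightarrow> P \<tau> \<delta>'"
  shows "\<exists>\<delta>>0. \<forall>\<tau>\<in>T. P \<tau> \<delta>"
  using assms(1,2)
proof (induction T rule: finite_induct)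
  case empty
  show ?case by (intro exI[of _ 1]) auto
next
  case (insert x F)
  obtain d1 where d1: "d1 > 0" "\<forall>\<tau>\<in>F. P \<tau> d1" using insert by blast
  obtain d2 where d2: "d2 > 0" "P x d2" using insert by blast
  have "\<forall>\<tau>\<in>insert x F. P \<tau> (min d1 d2)"
    using d1 d2 mono[of _ d1 "min d1 d2"] mono[of x d2 "min d1 d2"] by auto
  then show ?case using d1 d2 by (intro exI[of _ "min d1 d2"]) auto
qed

lemma nc_D: "L \<in> ncompacts \<Longrightarrow> compact L \<and> L \<noteq> {}"
  unfolding ncompacts_def by auto

lemma near_bound:
  fixes L :: "'a::real_normed_vector set"
  assumes "L \<in> ncompacts" "L' \<in> ncompacts" "\<forall>x\<in>L. norm x \<le> R" "Defs.hausdist L L' < d"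
  shows "\<forall>y\<in>L'. norm y \<le> R + d \<and> (\<exists>x\<in>L. dist y x < d)"
proof
  fix y assume y: "y \<in> L'"
  have "Defs.hausdist L' L < d" using assms(4) hd_sym by metis
  then obtain x where x: "x \<in> L" "dist y x < d"
    using hd_close[of L' L d y] nc_D[OF assms(1)] nc_D[OF assms(2)] y by blast
  have "norm y \<le> norm x + norm (y - x)" using norm_triangle_sub[of y x] by simp
  moreover have "norm x \<le> R" using x(1) assms(3) by blast
  moreover have "norm (y - x) < d" using x(2) by (simp add: dist_norm)
  ultimately have "norm y \<le> R + d" by linarith
  then show "norm y \<le> R + d \<and> (\<exists>x\<in>L. dist y x < d)" using x by blast
qed

lemma nm_cont:
  fixes L :: "(complex^'n) set"
  assumes L: "L \<in> ncompacts" and p: "polynomial_fun p" and t: "(SUP x\<in>L. cmod (p x)) < t"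
  shows "\<exists>\<delta>>0. \<forall>L'\<in>ncompacts. Defs.hausdist L L' < \<delta> \<longrightarrow> (SUP x\<in>L'. cmod (p x)) < t"
proof -
  obtain R where R: "\<forall>x\<in>L. norm x \<le> R"
    using compact_imp_bounded nc_D[OF L] bounded_pos by metis
  define K where "K = cball (0::complex^'n) (R + 1)"
  have "uniformly_continuous_on K p"
    unfolding K_def by (intro compact_uniformly_continuous poly_cont[OF p] compact_cball)
  moreover have "t - (SUP x\<in>L. cmod (p x)) > 0" using t by simp
  ultimately obtain d where d: "d > 0" "\<forall>x\<in>K. \<forall>x'\<in>K. dist x' x < d \<longrightarrow> dist (p x') (p x) < t - (SUP x\<in>L. cmod (p x))"
    unfolding uniformly_continuous_on_def by metis
  have "\<forall>L'\<in>ncompacts. Defs.hausdist L L' < min 1 d \<longrightarrow> (SUP x\<in>L'. cmod (p x)) < t"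
  proof (intro ballI impI)
    fix L' :: "(complex^'n) set" assume L': "L' \<in> ncompacts" and h: "Defs.hausdist L L' < min 1 d"
    obtain y where y: "y \<in> L'" "(SUP x\<in>L'. cmod (p x)) = cmod (p y)"
      using sup_attained[of L' "\<lambda>x. cmod (p x)"] nc_D[OF L'] continuous_on_norm[OF poly_cont[OF p]] by blast
    have nb: "\<forall>y\<in>L'. norm y \<le> R + min 1 d \<and> (\<exists>x\<in>L. dist y x < min 1 d)"
      by (rule near_bound[OF L L' R h])
    then obtain x where x: "x \<in> L" "dist y x < min 1 d" using y(1) by blast
    have yK: "y \<in> K" using nb y(1) unfolding K_def by (auto simp: dist_norm)
    have xK: "x \<in> K" using R x(1) unfolding K_def by (auto simp: dist_norm)
    have "dist (p y) (p x) < t - (SUP x\<in>L. cmod (p x))" using d(2) xK yK x(2) by auto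
    moreover have "cmod (p x) \<le> (SUP x\<in>L. cmod (p x))"
      by (intro cSUP_upper x(1) poly_bdd p) (use nc_D[OF L] in auto)
    moreover have "cmod (p y) \<le> cmod (p x) + dist (p y) (p x)"
      using norm_triangle_sub[of "p y" "p x"] by (simp add: dist_norm)
    ultimately show "(SUP x\<in>L'. cmod (p x)) < t" using y(2) by linarith
  qed
  then show ?thesis using d(1) by (intro exI[of _ "min 1 d"]) auto
qed

lemma hull_usc:
  fixes L :: "(complex^'n) set"
  assumes L: "L \<in> ncompacts" and e: "\<epsilon> > 0"
  shows "\<exists>\<delta>>0. \<forall>L'\<in>ncompacts. Defs.hausdist L L' < \<delta> \<longrightarrow>
           (\<forall>y\<in>poly_hull L'. \<exists>x\<in>poly_hull L. dist y x < \<epsilon>)"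
proof -
  obtain R where R: "\<forall>x\<in>L. norm x \<le> R"
    using compact_imp_bounded nc_D[OF L] bounded_pos by metis
  define B where "B = cball (0::complex^'n) (real CARD('n) * (R + 1))"
  define F where "F = B \<inter> {z. \<epsilon> \<le> setdist {z} (poly_hull L)}"
  define S where "S = {(p, t). polynomial_fun p \<and> (SUP x\<in>L. cmod (p x)) < t}"
  define Op where "Op = (\<lambda>(p, t). {z::complex^'n. t < cmod (p z)})"
  have HL: "poly_hull L \<noteq> {}" using nc_D[OF hull_ncompact[OF L]] by blast
  have cF: "compact F" unfolding F_def B_def
    by (intro compact_Int_closed compact_cball closed_Collect_le continuous_on_const continuous_on_setdist)
  have oO: "open (Op \<tau>)" if tS: "\<tau> \<in> S" for \<tau>
  proof -
    obtain p t where pt: "\<tau> = (p, t)" "polynomial_fun p" using tS unfolding S_def by auto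
    show ?thesis unfolding pt Op_def
      by (simp, intro open_Collect_less continuous_on_const continuous_on_norm poly_cont pt(2))
  qed
  have cov: "F \<subseteq> (\<Union>\<tau>\<in>S. Op \<tau>)"
  proof
    fix z assume z: "z \<in> F"
    have "z \<notin> poly_hull L"
    proof
      assume "z \<in> poly_hull L"
      then have "setdist {z} (poly_hull L) = 0" by (intro setdist_eq_0I) auto
      then show False using z e unfolding F_def by auto
    qed
    then obtain p where p: "polynomial_fun p" "(SUP x\<in>L. cmod (p x)) < cmod (p z)"
      unfolding poly_hull_def by (auto simp: not_le)
    let ?t = "((SUP x\<in>L. cmod (p x)) + cmod (p z)) / 2"
    have "(p, ?t) \<in> S" using p unfolding S_def by auto
    moreover have "z \<in> Op (p, ?t)" using p unfolding Op_def by auto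
    ultimately show "z \<in> (\<Union>\<tau>\<in>S. Op \<tau>)" by blast
  qed
  obtain T where T: "T \<subseteq> S" "finite T" "F \<subseteq> (\<Union>\<tau>\<in>T. Op \<tau>)"
    using compactE_image[OF cF oO cov] by blast
  have "\<exists>\<delta>>0. \<forall>\<tau>\<in>T. (\<forall>L'\<in>ncompacts. Defs.hausdist L L' < \<delta> \<longrightarrow>
            (SUP x\<in>L'. cmod (fst \<tau> x)) < snd \<tau>)"
  proof (rule finite_delta[OF T(2)])
    fix \<tau> assume "\<tau> \<in> T"
    then have "\<tau> \<in> S" using T(1) by blast
    then obtain p t where pt: "\<tau> = (p, t)" "polynomial_fun p" "(SUP x\<in>L. cmod (p x)) < t"
      unfolding S_def by auto
    show "\<exists>\<delta>>0. \<forall>L'\<in>ncompacts. Defs.hausdist L L' < \<delta> \<longrightarrow> (SUP x\<in>L'. cmod (fst \<tau> x)) < snd \<tau>"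
      using nm_cont[OF L pt(2,3)] unfolding pt by simp
  qed auto
  then obtain d where d: "d > 0" "\<forall>\<tau>\<in>T. \<forall>L'\<in>ncompacts. Defs.hausdist L L' < d \<longrightarrow>
            (SUP x\<in>L'. cmod (fst \<tau> x)) < snd \<tau>"
    by blast
  have "\<forall>L'\<in>ncompacts. Defs.hausdist L L' < min 1 d \<longrightarrow>
           (\<forall>y\<in>poly_hull L'. \<exists>x\<in>poly_hull L. dist y x < \<epsilon>)"
  proof (intro ballI impI)
    fix L' :: "(complex^'n) set" and y
    assume L': "L' \<in> ncompacts" and h: "Defs.hausdist L L' < min 1 d" and y: "y \<in> poly_hull L'"
    have nb: "\<forall>y\<in>L'. norm y \<le> R + min 1 d \<and> (\<exists>x\<in>L. dist y x < min 1 d)"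
      by (rule near_bound[OF L L' R h])
    then have "L' \<subseteq> cball 0 (R + 1)" by auto
    then have "poly_hull L' \<subseteq> B" unfolding B_def using hull_bound nc_D[OF L'] by blast
    then have yB: "y \<in> B" using y by blast
    have "setdist {y} (poly_hull L) < \<epsilon>"
    proof (rule ccontr)
      assume "\<not> ?thesis"
      then have "y \<in> F" using yB unfolding F_def by auto
      then obtain \<tau> where tau: "\<tau> \<in> T" "y \<in> Op \<tau>" using T(3) by blast
      then obtain p t where pt: "\<tau> = (p, t)" "polynomial_fun p" using T(1) unfolding S_def by auto
      have "t < cmod (p y)" using tau(2) unfolding pt Op_def by auto
      moreover have "cmod (p y) \<le> (SUP x\<in>L'. cmod (p x))" using y pt(2) unfolding poly_hull_def by auto
      moreover have "(SUP x\<in>L'. cmod (p x)) < t" using d(2) tau(1) L' h unfolding pt by auto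
      ultimately show False by linarith
    qed
    then obtain u x where "u \<in> {y}" "x \<in> poly_hull L" "dist u x < \<epsilon>"
      using setdist_ltE HL by blast
    then show "\<exists>x\<in>poly_hull L. dist y x < \<epsilon>" by blast
  qed
  then show ?thesis by (intro exI[of _ "min 1 d"]) (use d(1) in auto)
qed

lemma space_K: "space Kspace = ncompacts"
  unfolding Kspace_def by (simp add: space_measure_of_conv)

lemma open_in_K: "hausdorff_open U \<Longrightarrow> U \<in> sets Kspace"
proof -
  assume U: "hausdorff_open U"
  have sub: "{U. hausdorff_open U} \<subseteq> Pow ncompacts" unfolding hausdorff_open_def by auto
  show ?thesis unfolding Kspace_def sets_measure_of[OF sub] using U by (auto intro: sigma_sets.Basic)
qed

lemma f1_open:
  fixes C :: "(complex^'n) set"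
  assumes C: "finite C" "C \<noteq> {}"
  shows "hausdorff_open {L\<in>ncompacts. a < (SUP x\<in>C. setdist {x} (poly_hull L))}"
  unfolding hausdorff_open_def
proof (intro conjI ballI)
  fix L assume "L \<in> {L\<in>ncompacts. a < (SUP x\<in>C. setdist {x} (poly_hull L))}"
  then have L: "L \<in> ncompacts" and aL: "a < (SUP x\<in>C. setdist {x} (poly_hull L))" by auto
  obtain x where x: "x \<in> C" "a < setdist {x} (poly_hull L)"
    using aL less_cSUP_iff[of C "\<lambda>x. setdist {x} (poly_hull L)" a] C by auto
  define dd where "dd = setdist {x} (poly_hull L) - a"
  have dd: "dd > 0" using x unfolding dd_def by simp
  obtain \<delta> where \<delta>: "\<delta> > 0" "\<forall>L'\<in>ncompacts. Defs.hausdist L L' < \<delta> \<longrightarrow>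
           (\<forall>y\<in>poly_hull L'. \<exists>z\<in>poly_hull L. dist y z < dd/2)"
    using hull_usc[OF L, of "dd/2"] dd by auto
  have "\<forall>L'\<in>ncompacts. Defs.hausdist L L' < \<delta> \<longrightarrow> L' \<in> {L\<in>ncompacts. a < (SUP x\<in>C. setdist {x} (poly_hull L))}"
  proof (intro ballI impI)
    fix L' :: "(complex^'n) set" assume L': "L' \<in> ncompacts" and h: "Defs.hausdist L L' < \<delta>"
    have HL': "poly_hull L' \<noteq> {}" using nc_D[OF hull_ncompact[OF L']] by blast
    have "setdist {x} (poly_hull L) - dd/2 \<le> setdist {x} (poly_hull L')"
    proof (rule le_setdistI)
      fix u y assume u: "u \<in> {x}" and y: "y \<in> poly_hull L'"
      obtain z where z: "z \<in> poly_hull L" "dist y z < dd/2" using \<delta>(2) L' h y by blast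
      have "setdist {x} (poly_hull L) \<le> dist x z" by (rule setdist_le_dist) (use z in auto)
      also have "\<dots> \<le> dist x y + dist y z" by (rule dist_triangle)
      finally show "setdist {x} (poly_hull L) - dd/2 \<le> dist u y" using u z(2) by simp
    qed (use HL' in auto)
    then have "a < setdist {x} (poly_hull L')" using dd dd_def by linarith
    also have "\<dots> \<le> (SUP x\<in>C. setdist {x} (poly_hull L'))"
      by (intro cSUP_upper x(1)) (use C in auto)
    finally show "L' \<in> {L\<in>ncompacts. a < (SUP x\<in>C. setdist {x} (poly_hull L))}" using L' by simp
  qed
  then show "\<exists>e>0. \<forall>L'\<in>ncompacts. Defs.hausdist L L' < e \<longrightarrow> L' \<in> {L\<in>ncompacts. a < (SUP x\<in>C. setdist {x} (poly_hull L))}"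
    using \<delta>(1) by blast
qed auto

lemma f2_open:
  fixes C :: "(complex^'n) set"
  shows "hausdorff_open {L\<in>ncompacts. (SUP y\<in>poly_hull L. setdist {y} C) < a}"
  unfolding hausdorff_open_def
proof (intro conjI ballI)
  fix L assume "L \<in> {L\<in>ncompacts. (SUP y\<in>poly_hull L. setdist {y} C) < a}"
  then have L: "L \<in> ncompacts" and aL: "(SUP y\<in>poly_hull L. setdist {y} C) < a" by auto
  define dd where "dd = a - (SUP y\<in>poly_hull L. setdist {y} C)"
  have dd: "dd > 0" using aL unfolding dd_def by simp
  have HL: "compact (poly_hull L)" using nc_D[OF hull_ncompact[OF L]] by blast
  obtain \<delta> where \<delta>: "\<delta> > 0" "\<forall>L'\<in>ncompacts. Defs.hausdist L L' < \<delta> \<longrightarrow>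
           (\<forall>y\<in>poly_hull L'. \<exists>z\<in>poly_hull L. dist y z < dd/2)"
    using hull_usc[OF L, of "dd/2"] dd by auto
  have "\<forall>L'\<in>ncompacts. Defs.hausdist L L' < \<delta> \<longrightarrow> L' \<in> {L\<in>ncompacts. (SUP y\<in>poly_hull L. setdist {y} C) < a}"
  proof (intro ballI impI)
    fix L' :: "(complex^'n) set" assume L': "L' \<in> ncompacts" and h: "Defs.hausdist L L' < \<delta>"
    have HL': "poly_hull L' \<noteq> {}" using nc_D[OF hull_ncompact[OF L']] by blast
    have "(SUP y\<in>poly_hull L'. setdist {y} C) \<le> (SUP y\<in>poly_hull L. setdist {y} C) + dd/2"
    proof (rule cSUP_least[OF HL'])
      fix y assume y: "y \<in> poly_hull L'"
      obtain z where z: "z \<in> poly_hull L" "dist y z < dd/2" using \<delta>(2) L' h y by blast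
      have "setdist {y} C \<le> setdist {z} C + dist y z"
        using setdist_Lipschitz[of y C z] by linarith
      also have "setdist {z} C \<le> (SUP y\<in>poly_hull L. setdist {y} C)"
        by (intro cSUP_upper z(1) bdd_setdist_img HL)
      finally show "setdist {y} C \<le> (SUP y\<in>poly_hull L. setdist {y} C) + dd/2" using z(2) by linarith
    qed
    then have "(SUP y\<in>poly_hull L'. setdist {y} C) < a" using dd dd_def by linarith
    then show "L' \<in> {L\<in>ncompacts. (SUP y\<in>poly_hull L. setdist {y} C) < a}"
      using L' by simp
  qed
  then show "\<exists>e>0. \<forall>L'\<in>ncompacts. Defs.hausdist L L' < e \<longrightarrow> L' \<in> {L\<in>ncompacts. (SUP y\<in>poly_hull L. setdist {y} C) < a}"
    using \<delta>(1) by blast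
qed auto

lemma ball_meas:
  fixes K :: "'a \<Rightarrow> (complex ^ 'n) set" and C :: "(complex^'n) set"
  assumes K: "K \<in> measurable M Kspace" and C: "finite C" "C \<noteq> {}"
  shows "{\<omega>\<in>space M. Defs.hausdist C (poly_hull (K \<omega>)) < r} \<in> sets M"
proof -
  have g1: "(\<lambda>L. SUP x\<in>C. setdist {x} (poly_hull L)) \<in> borel_measurable Kspace"
    unfolding borel_measurable_iff_greater space_K using f1_open[OF C] open_in_K by blast
  have g2: "(\<lambda>L. SUP y\<in>poly_hull L. setdist {y} C) \<in> borel_measurable Kspace"
    unfolding borel_measurable_iff_less space_K using f2_open open_in_K by blast
  have "(\<lambda>\<omega>. Defs.hausdist C (poly_hull (K \<omega>))) \<in> borel_measurable M"
    unfolding Defs.hausdist_def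
    by (intro borel_measurable_max measurable_compose[OF K g1] measurable_compose[OF K g2])
  then show ?thesis unfolding borel_measurable_iff_less by blast
qed

theorem theorem6p13:
  fixes M :: "'a measure" and K :: "'a \<Rightarrow> (complex ^ 'n) set"
  assumes "K \<in> measurable M Kspace"
  shows "(\<lambda>\<omega>. poly_hull (K \<omega>)) \<in> measurable M Kspace"
proof -
  note K = assms
  obtain D :: "(complex^'n) set" where D: "countable D" "\<And>X. open X \<Longrightarrow> X \<noteq> {} \<Longrightarrow> \<exists>d\<in>D. d \<in> X"
    using countable_dense_setE by blast
  define Dc where "Dc = {C. finite C \<and> C \<subseteq> D \<and> C \<noteq> {}}"
  have cDc: "countable Dc"
    by (rule countable_subset[OF _ countable_Collect_finite_subset[OF D(1)]]) (auto simp: Dc_def)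
  have Kn: "K \<omega> \<in> ncompacts" if "\<omega> \<in> space M" for \<omega>
    using measurable_space[OF K that] unfolding space_K .
  have sub: "{U. hausdorff_open U} \<subseteq> Pow ncompacts" unfolding hausdorff_open_def by auto
  show ?thesis unfolding Kspace_def
  proof (rule measurable_measure_of[OF sub])
    show "(\<lambda>\<omega>. poly_hull (K \<omega>)) \<in> space M \<rightarrow> ncompacts" using Kn hull_ncompact by blast
  next
    fix U :: "(complex^'n) set set" assume "U \<in> {U. hausdorff_open U}"
    then have U: "hausdorff_open U" by simp
    define I where "I = {(C, r). C \<in> Dc \<and> r \<in> \<rat> \<and> {L'\<in>ncompacts. Defs.hausdist C L' < r} \<subseteq> U}"
    have cI: "countable I"
      by (rule countable_subset[of _ "Dc \<times> \<rat>"]) (auto simp: I_def cDc countable_rat)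
    have eq: "(\<lambda>\<omega>. poly_hull (K \<omega>)) -` U \<inter> space M =
        (\<Union>\<tau>\<in>I. {\<omega>\<in>space M. Defs.hausdist (fst \<tau>) (poly_hull (K \<omega>)) < snd \<tau>})"
    proof (intro equalityI subsetI)
      fix \<omega> assume w: "\<omega> \<in> (\<lambda>\<omega>. poly_hull (K \<omega>)) -` U \<inter> space M"
      define L where "L = poly_hull (K \<omega>)"
      have LU: "L \<in> U" and wM: "\<omega> \<in> space M" using w unfolding L_def by auto
      have Ln: "L \<in> ncompacts" unfolding L_def using hull_ncompact Kn wM by blast
      obtain e where e: "e > 0" "\<forall>L'\<in>ncompacts. Defs.hausdist L L' < e \<longrightarrow> L' \<in> U"
        using U LU unfolding hausdorff_open_def by blast
      obtain C where C: "finite C" "C \<subseteq> D" "C \<noteq> {}" "Defs.hausdist C L < e/3"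
        using hd_dense[OF D(2) _ _, of L "e/3"] nc_D[OF Ln] e(1) by auto
      obtain r where r: "r \<in> \<rat>" "e/3 < r" "r < 2*e/3"
        using Rats_dense_in_real[of "e/3" "2*e/3"] e(1) by auto
      have Cn: "C \<in> ncompacts" using C finite_imp_compact unfolding ncompacts_def by blast
      have "{L'\<in>ncompacts. Defs.hausdist C L' < r} \<subseteq> U"
      proof
        fix L' assume "L' \<in> {L'\<in>ncompacts. Defs.hausdist C L' < r}"
        then have L': "L' \<in> ncompacts" "Defs.hausdist C L' < r" by auto
        have "Defs.hausdist L C < e/3" using C(4) hd_sym by metis
        then have "Defs.hausdist L L' \<le> e/3 + r"
          using hd_triangle_lt[of L C L' "e/3" r] nc_D[OF Ln] nc_D[OF Cn] nc_D[OF L'(1)] L'(2) by blast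
        then have "Defs.hausdist L L' < e" using r by linarith
        then show "L' \<in> U" using e(2) L'(1) by blast
      qed
      then have "(C, r) \<in> I" using C r unfolding I_def Dc_def by auto
      moreover have "Defs.hausdist C (poly_hull (K \<omega>)) < r" using C(4) r unfolding L_def by linarith
      ultimately show "\<omega> \<in> (\<Union>\<tau>\<in>I. {\<omega>\<in>space M. Defs.hausdist (fst \<tau>) (poly_hull (K \<omega>)) < snd \<tau>})"
        using wM by force
    next
      fix \<omega> assume "\<omega> \<in> (\<Union>\<tau>\<in>I. {\<omega>\<in>space M. Defs.hausdist (fst \<tau>) (poly_hull (K \<omega>)) < snd \<tau>})"
      then obtain C r where Cr: "(C, r) \<in> I" "\<omega> \<in> space M" "Defs.hausdist C (poly_hull (K \<omega>)) < r"
        by auto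
      have "poly_hull (K \<omega>) \<in> ncompacts" using hull_ncompact Kn Cr(2) by blast
      then have "poly_hull (K \<omega>) \<in> U" using Cr unfolding I_def by blast
      then show "\<omega> \<in> (\<lambda>\<omega>. poly_hull (K \<omega>)) -` U \<inter> space M" using Cr(2) by simp
    qed
    show "(\<lambda>\<omega>. poly_hull (K \<omega>)) -` U \<inter> space M \<in> sets M"
      unfolding eq
    proof (rule sets.countable_UN''[OF cI])
      fix \<tau> assume "\<tau> \<in> I"
      then obtain C r where "\<tau> = (C, r)" "finite C" "C \<noteq> {}" unfolding I_def Dc_def by auto
      then show "{\<omega>\<in>space M. Defs.hausdist (fst \<tau>) (poly_hull (K \<omega>)) < snd \<tau>} \<in> sets M"
        using ball_meas[OF K] by simp
    qed
  qed
qed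

end
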